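(* Let $m\ge2$, let $U\subset\mathbb C$ be an open disk, and let $(u,\boldsymbol x)\mapsto g_u(\boldsymbol x)$ belong to $\mathfrak X^m(U)$. Let $\theta>0$. Then the function $$p_u(\boldsymbol x):=f_\theta\big(x_1-\log(1+e^{x_1+x_2})\big)\int_{\mathbb R}g_u(x_1+x_2-y,\,y,\,x_3,\dots,x_m)\,dy$$ also belongs to $\mathfrak X^m(U)$.
   Context: $f_\theta(x)=e^{-\theta x-e^{-x}}$. For an open disk $U\subset\mathbb C$ and $m\in\mathbb Z_{\ge1}$, $\mathfrak X^m(U)$ is the set of measurable functions $U\times\mathbb R^m\ni(u,\boldsymbol x)\mapsto g_u(\boldsymbol x)\in\mathbb C$ such that (1) there exist $C,r>0$ with $|g_u(\boldsymbol x)|\le C\exp(-r\sum_{i=1}^m|x_i|)$ for all $(u,\boldsymbol x)\in U\times\mathbb R^m$, and (2) for each fixed $\boldsymbol x\in\mathbb R^m$, $u\mapsto g_u(\boldsymbol x)$ is holomorphic on $U$. *)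

theory Defs
  imports "HOL-Analysis.Analysis"
begin

definition f_theta :: "real \<Rightarrow> real \<Rightarrow> real" where
  "f_theta \<theta> x = exp (- \<theta> * x - exp (- x))"

text \<open>Points of R^m are functions nat => real restricted to the coordinates {..<m}
  (coordinate i-1 of the paper is index i here), i.e. elements of the space of
  PiM {..<m} (\<lambda>_. lborel).\<close>
abbreviation Rm :: "nat \<Rightarrow> (nat \<Rightarrow> real) measure" where
  "Rm m \<equiv> PiM {..<m} (\<lambda>_. lborel)"

definition frakX :: "nat \<Rightarrow> complex set \<Rightarrow> (complex \<Rightarrow> (nat \<Rightarrow> real) \<Rightarrow> complex) set" where
  "frakX m U = {g.
     (\<lambda>(u, x). g u x) \<in> borel_measurable (restrict_space borel U \<Otimes>\<^sub>M Rm m) \<and>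
     (\<exists>C r. C > 0 \<and> r > 0 \<and>
        (\<forall>u\<in>U. \<forall>x\<in>space (Rm m). norm (g u x) \<le> C * exp (- r * (\<Sum>i<m. \<bar>x i\<bar>)))) \<and>
     (\<forall>x\<in>space (Rm m). (\<lambda>u. g u x) holomorphic_on U)}"

end

theory Submission
  imports Defs "HOL-Complex_Analysis.Complex_Analysis" "HOL-Real_Asymp.Real_Asymp"
begin


lemma integrable_exp_abs:
  fixes a :: real assumes a: "a > 0"
  shows "integrable lborel (\<lambda>y. exp (- a * \<bar>y\<bar>))"
proof -
  define h where "h = (\<lambda>y::real. indicator {0..} y *\<^sub>R exp (- a * y))"
  have "(\<lambda>x. exp (- a * x)) absolutely_integrable_on {0::real..}"
    by (rule nonnegative_absolutely_integrable_1[OF integrable_on_exp_minus_to_infinity[OF a]]) auto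
  then have "integrable lebesgue h"
    unfolding h_def set_integrable_def by simp
  then have hi: "integrable lborel h"
    by (subst (asm) integrable_completion) (auto simp: h_def)
  have hi2: "integrable lborel (\<lambda>y. h (0 + (-1) * y))"
    by (rule lborel_integrable_real_affine[OF hi]) simp
  have "integrable lborel (\<lambda>y. h y + h (0 + (-1) * y))"
    using hi hi2 by simp
  then show ?thesis
  proof (rule Bochner_Integration.integrable_bound)
    show "AE x in lborel. norm (exp (- a * \<bar>x\<bar>)) \<le> norm (h x + h (0 + (-1) * x))"
      by (auto simp: h_def indicator_def abs_if)
  qed simp
qed



lemma holo_integral:
  fixes h :: "complex \<Rightarrow> real \<Rightarrow> complex" and B :: "real \<Rightarrow> real"
  assumes U: "open U"
    and hol: "\<And>y. (\<lambda>u. h u y) holomorphic_on U"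
    and meas: "\<And>u. u \<in> U \<Longrightarrow> h u \<in> borel_measurable lborel"
    and Bi: "integrable lborel B"
    and bnd: "\<And>u y. u \<in> U \<Longrightarrow> norm (h u y) \<le> B y"
  shows "(\<lambda>u. LINT y|lborel. h u y) holomorphic_on U"
  unfolding holomorphic_on_def
proof
  fix u0 assume u0: "u0 \<in> U"
  obtain e where e: "e > 0" "cball u0 e \<subseteq> U"
    using U u0 open_contains_cball by blast
  define \<delta> where "\<delta> = e / 2"
  have d: "\<delta> > 0" "cball u0 (2 * \<delta>) \<subseteq> U" using e by (auto simp: \<delta>_def)
  define D where "D y = deriv (\<lambda>u. h u y) u0" for y
  have hint: "integrable lborel (h u)" if "u \<in> U" for u
    using Bi meas[OF that] 
    by (rule Bochner_Integration.integrable_bound) (use bnd[OF that] in \<open>auto intro: order_trans[OF _ abs_ge_self]\<close>)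
  have ballU: "ball z \<delta> \<subseteq> U" "cball z \<delta> \<subseteq> U" if "z \<in> ball u0 \<delta>" for z
  proof -
    have "cball z \<delta> \<subseteq> cball u0 (2 * \<delta>)"
      using that by (auto simp: subset_iff) (smt (verit) dist_commute dist_triangle)
    then show "cball z \<delta> \<subseteq> U" "ball z \<delta> \<subseteq> U" using d ball_subset_cball by blast+
  qed
  have inU: "z \<in> U" if "z \<in> ball u0 \<delta>" for z
    using d that by (smt (verit) mem_ball mem_cball subsetD)
  have dbound: "norm (deriv (\<lambda>u. h u y) z) \<le> B y / \<delta>" if z: "z \<in> ball u0 \<delta>" for y z
  proof -
    have "norm ((deriv ^^ 1) (\<lambda>u. h u y) z) \<le> fact 1 * B y / \<delta> ^ 1"
    proof (rule Cauchy_inequality)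
      show "(\<lambda>u. h u y) holomorphic_on ball z \<delta>"
        using hol ballU[OF z] holomorphic_on_subset by blast
      show "continuous_on (cball z \<delta>) (\<lambda>u. h u y)"
        using hol ballU[OF z] holomorphic_on_subset holomorphic_on_imp_continuous_on by blast
      show "0 < \<delta>" by (rule d)
      show "norm (h x y) \<le> B y" if "norm (z - x) = \<delta>" for x
        using bnd ballU(2)[OF z] that by (auto simp: dist_norm)
    qed
    then show ?thesis by simp
  qed
  have qbound: "norm (h u y - h u0 y) \<le> B y / \<delta> * norm (u - u0)" if "u \<in> ball u0 \<delta>" for u y
  proof (rule field_differentiable_bound[where S="ball u0 \<delta>"])
    show "((\<lambda>u. h u y) has_field_derivative deriv (\<lambda>u. h u y) z) (at z within ball u0 \<delta>)"
      if "z \<in> ball u0 \<delta>" for z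
      using holomorphic_derivI[OF hol U] ballU(2)[OF that] d(1) by (meson centre_in_cball less_imp_le subsetD)
  qed (use that d dbound in auto)
  have lim: "(\<lambda>n. (h (X n) y - h u0 y) / (X n - u0)) \<longlonglongrightarrow> D y"
    if "\<And>i. X i \<in> ball u0 \<delta> - {u0}" "X \<longlonglongrightarrow> u0" for X y
  proof -
    have "((\<lambda>u. h u y) has_field_derivative D y) (at u0 within ball u0 \<delta>)"
      unfolding D_def using holomorphic_derivI[OF hol U u0] .
    then have "((\<lambda>u. (h u y - h u0 y) / (u - u0)) \<longlongrightarrow> D y) (at u0 within ball u0 \<delta>)"
      by (simp add: has_field_derivative_iff)
    then show ?thesis using that unfolding tendsto_at_iff_sequentially by (auto simp: o_def)
  qed
  define X0 where "X0 n = u0 + of_real (\<delta> / (real n + 2))" for n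
  have X0: "X0 i \<in> ball u0 \<delta> - {u0}" for i
  proof -
    have e1: "X0 i - u0 = of_real (\<delta> / (real i + 2))" by (simp add: X0_def)
    have "dist u0 (X0 i) = \<bar>\<delta> / (real i + 2)\<bar>" by (metis dist_commute dist_norm e1 norm_of_real)
    also have "\<dots> = \<delta> / (real i + 2)" using d by simp
    finally have eq: "dist u0 (X0 i) = \<delta> / (real i + 2)" .
    have "\<delta> / (real i + 2) < \<delta>" "\<delta> / (real i + 2) > 0" using d by (auto simp: divide_less_eq)
    then show ?thesis using eq by auto
  qed
  have "(\<lambda>n. \<delta> / (real n + 2)) \<longlonglongrightarrow> 0"
    by real_asymp
  then have "(\<lambda>n. u0 + of_real (\<delta> / (real n + 2))) \<longlonglongrightarrow> u0 + of_real 0"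
    by (intro tendsto_intros)
  then have X0lim: "X0 \<longlonglongrightarrow> u0" unfolding X0_def of_real_0 add_0_right .
  have Dmeas: "D \<in> borel_measurable lborel"
  proof (rule borel_measurable_LIMSEQ_metric[where f="\<lambda>n y. (h (X0 n) y - h u0 y) / (X0 n - u0)"])
    show "(\<lambda>y. (h (X0 n) y - h u0 y) / (X0 n - u0)) \<in> borel_measurable lborel" for n
    proof -
      have [measurable]: "h (X0 n) \<in> borel_measurable lborel" "h u0 \<in> borel_measurable lborel"
        using meas[of "X0 n"] meas[OF u0] X0[of n] inU by auto
      show ?thesis by measurable
    qed
  qed (use lim[OF X0 X0lim] in auto)
  have "((\<lambda>u. ((LINT y|lborel. h u y) - (LINT y|lborel. h u0 y)) / (u - u0)) \<longlongrightarrow> (LINT y|lborel. D y)) (at u0 within ball u0 \<delta>)"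
    unfolding tendsto_at_iff_sequentially
  proof (intro allI impI)
    fix X assume X: "\<forall>i. X i \<in> ball u0 \<delta> - {u0}" "X \<longlonglongrightarrow> u0"
    have XU: "X i \<in> U" for i using X inU by blast
    have eq: "((LINT y|lborel. h (X i) y) - (LINT y|lborel. h u0 y)) / (X i - u0)
        = (LINT y|lborel. (h (X i) y - h u0 y) / (X i - u0))" for i
      by (simp only: integral_divide_zero Bochner_Integration.integral_diff[OF hint[OF XU] hint[OF u0]])
    have "(\<lambda>i. LINT y|lborel. (h (X i) y - h u0 y) / (X i - u0)) \<longlonglongrightarrow> (LINT y|lborel. D y)"
    proof (rule integral_dominated_convergence[where w="\<lambda>y. B y / \<delta>"])
      show "(\<lambda>y. (h (X i) y - h u0 y) / (X i - u0)) \<in> borel_measurable lborel" for i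
      proof -
        have [measurable]: "h (X i) \<in> borel_measurable lborel" "h u0 \<in> borel_measurable lborel"
          using meas[OF XU] meas[OF u0] by auto
        show ?thesis by measurable
      qed
      show "integrable lborel (\<lambda>y. B y / \<delta>)" using Bi by simp
      show "AE y in lborel. (\<lambda>i. (h (X i) y - h u0 y) / (X i - u0)) \<longlonglongrightarrow> D y"
        by (intro AE_I2 lim) (use X in auto)
      show "AE y in lborel. norm ((h (X i) y - h u0 y) / (X i - u0)) \<le> B y / \<delta>" for i
      proof -
        have ne: "X i \<noteq> u0" "X i \<in> ball u0 \<delta>" using X by auto
        have "norm ((h (X i) y - h u0 y) / (X i - u0)) \<le> B y / \<delta>" for y
          using qbound[OF ne(2), of y] ne(1) by (simp add: norm_divide divide_le_eq)
        then show ?thesis by auto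
      qed
    qed (rule Dmeas)
    then show "((\<lambda>u. ((LINT y|lborel. h u y) - (LINT y|lborel. h u0 y)) / (u - u0)) \<circ> X) \<longlonglongrightarrow> (LINT y|lborel. D y)"
      by (simp add: o_def eq)
  qed
  then have "((\<lambda>u. LINT y|lborel. h u y) has_field_derivative (LINT y|lborel. D y)) (at u0 within ball u0 \<delta>)"
    by (simp add: has_field_derivative_iff)
  then have "((\<lambda>u. LINT y|lborel. h u y) has_field_derivative (LINT y|lborel. D y)) (at u0)"
    using at_within_open[of u0 "ball u0 \<delta>"] d(1) by simp
  then show "(\<lambda>u. LINT y|lborel. h u y) field_differentiable at u0 within U"
    unfolding field_differentiable_def by (blast intro: has_field_derivative_at_within)
qed



lemma upd_meas:
  assumes X: "X \<in> measurable M (Rm m)" and Y: "Y \<in> borel_measurable M" and m: "m \<ge> 2"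
  shows "(\<lambda>\<omega>. (X \<omega>)(0 := X \<omega> 0 + X \<omega> 1 - Y \<omega>, 1 := Y \<omega>)) \<in> measurable M (Rm m)"
proof -
  have comp: "(\<lambda>\<omega>. X \<omega> j) \<in> borel_measurable M" if "j < m" for j
    using measurable_compose[OF X measurable_component_singleton[of j "{..<m}" "\<lambda>_. lborel"]] that
    by simp
  have A: "(\<lambda>\<omega> i. (\<lambda>i \<omega>. if i = 1 then Y \<omega> else if i = 0 then X \<omega> 0 + X \<omega> 1 - Y \<omega> else X \<omega> i) i \<omega>)
      \<in> measurable M (Rm m)"
  proof (rule measurable_PiM_single')
    fix i assume i: "i \<in> {..<m}"
    have [measurable]: "(\<lambda>\<omega>. X \<omega> 0) \<in> borel_measurable M" "(\<lambda>\<omega>. X \<omega> 1) \<in> borel_measurable M"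
      "(\<lambda>\<omega>. X \<omega> i) \<in> borel_measurable M" "Y \<in> borel_measurable M"
      using comp[of 0] comp[of 1] comp[of i] i m Y by auto
    show "(\<lambda>\<omega>. if i = 1 then Y \<omega> else if i = 0 then X \<omega> 0 + X \<omega> 1 - Y \<omega> else X \<omega> i) \<in> measurable M lborel"
      unfolding measurable_lborel2 by measurable
  next
    show "(\<lambda>\<omega> i. if i = 1 then Y \<omega> else if i = 0 then X \<omega> 0 + X \<omega> 1 - Y \<omega> else X \<omega> i)
        \<in> space M \<rightarrow> (\<Pi>\<^sub>E i\<in>{..<m}. space lborel)"
      using measurable_space[OF X] m by (auto simp: space_PiM PiE_def extensional_def)
  qed
  have B: "(\<lambda>\<omega> i. (\<lambda>i \<omega>. if i = 1 then Y \<omega> else if i = 0 then X \<omega> 0 + X \<omega> 1 - Y \<omega> else X \<omega> i) i \<omega>)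
     = (\<lambda>\<omega>. (X \<omega>)(0 := X \<omega> 0 + X \<omega> 1 - Y \<omega>, 1 := Y \<omega>))"
    by (auto simp: fun_eq_iff)
  show ?thesis using A unfolding B .
qed

lemma upd_space:
  assumes "x \<in> space (Rm m)" "m \<ge> 2"
  shows "x(0 := x 0 + x 1 - y, 1 := y) \<in> space (Rm m)"
  using assms by (auto simp: space_PiM PiE_def extensional_def)

lemma sum_split2:
  fixes z :: "nat \<Rightarrow> real" assumes "m \<ge> 2"
  shows "(\<Sum>i<m. \<bar>z i\<bar>) = \<bar>z 0\<bar> + \<bar>z 1\<bar> + (\<Sum>i\<in>{2..<m}. \<bar>z i\<bar>)"
proof -
  have "{..<m} = insert 0 (insert 1 {2..<m})" using assms by auto
  then show ?thesis by simp
qed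

lemma sum_upd:
  fixes x :: "nat \<Rightarrow> real" assumes "m \<ge> 2"
  shows "(\<Sum>i<m. \<bar>(x(0 := a, 1 := b)) i\<bar>) = \<bar>a\<bar> + \<bar>b\<bar> + (\<Sum>i\<in>{2..<m}. \<bar>x i\<bar>)"
  using sum_split2[OF assms, of "x(0 := a, 1 := b)"] by simp

lemma f_theta_bound:
  assumes th: "\<theta> > 0"
  shows "f_theta \<theta> z \<le> exp ((\<theta> + 1)\<^sup>2 / 2) * exp (- min \<theta> 1 * \<bar>z\<bar>)"
proof -
  have "- \<theta> * z - exp (- z) \<le> (\<theta> + 1)\<^sup>2 / 2 + (- min \<theta> 1 * \<bar>z\<bar>)"
  proof (cases "z \<ge> 0")
    case True
    have "min \<theta> 1 * z \<le> \<theta> * z" using True by (intro mult_right_mono) auto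
    moreover have "exp (- z) \<ge> 0" by simp
    moreover have "(\<theta> + 1)\<^sup>2 / 2 \<ge> 0" by simp
    ultimately show ?thesis using True by linarith
  next
    case False
    define t where "t = - z"
    have t: "t > 0" using False by (simp add: t_def)
    have e: "1 + t + t\<^sup>2 / 2 \<le> exp t" using exp_lower_Taylor_quadratic t by simp
    have m1: "min \<theta> 1 * t \<le> 1 * t" using t by (intro mult_right_mono) auto
    have sq: "0 \<le> (t - \<theta>)\<^sup>2" by simp
    have "\<theta> * t - exp t \<le> (\<theta> + 1)\<^sup>2 / 2 - min \<theta> 1 * t"
      using e m1 sq th by (simp add: power2_eq_square algebra_simps) 
    then show ?thesis using False by (simp add: t_def)
  qed
  then have "exp (- \<theta> * z - exp (- z)) \<le> exp ((\<theta> + 1)\<^sup>2 / 2 + (- min \<theta> 1 * \<bar>z\<bar>))"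
    by simp
  then show ?thesis unfolding f_theta_def by (simp only: exp_add)
qed

lemma ln_bounds:
  fixes s :: real
  shows "ln (1 + exp s) \<ge> 0" "ln (1 + exp s) \<ge> s" "ln (1 + exp s) \<le> max s 0 + 1"
proof -
  show "ln (1 + exp s) \<ge> 0" by simp
  have p: "0 < 1 + exp s" by (simp add: add_pos_pos)
  have "ln (exp s) \<le> ln (1 + exp s)"
    by (subst ln_le_cancel_iff) (use p in auto)
  then show "ln (1 + exp s) \<ge> s" by simp
  have two: "2 \<le> exp (1::real)" using exp_ge_add_one_self[of 1] by simp
  have a: "1 \<le> exp (max s 0)" by simp
  have b: "exp s \<le> exp (max s 0)" by simp
  have "1 + exp s \<le> 2 * exp (max s 0)" using a b by linarith
  also have "\<dots> \<le> exp 1 * exp (max s 0)" using two by (intro mult_right_mono) auto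
  also have "\<dots> = exp (max s 0 + 1)" by (simp add: exp_add)
  finally have "ln (1 + exp s) \<le> ln (exp (max s 0 + 1))"
    by (subst ln_le_cancel_iff) (use p in auto)
  then show "ln (1 + exp s) \<le> max s 0 + 1" by simp
qed

lemma coord_bound_aux:
  fixes x0 x1 L :: real
  assumes "L \<ge> 0" "L \<ge> x0 + x1" "L \<le> max (x0 + x1) 0 + 1"
  shows "\<bar>x0\<bar> + \<bar>x1\<bar> \<le> 2 * \<bar>x0 - L\<bar> + \<bar>x0 + x1\<bar> + 2"
  using assms by (smt (verit))

lemma coord_bound:
  fixes x0 x1 :: real
  shows "\<bar>x0\<bar> + \<bar>x1\<bar> \<le> 2 * \<bar>x0 - ln (1 + exp (x0 + x1))\<bar> + \<bar>x0 + x1\<bar> + 2"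
  by (rule coord_bound_aux) (use ln_bounds[of "x0 + x1"] in auto)


theorem lemma3p24:
  fixes m :: nat and c :: complex and \<rho> \<theta> :: real
    and g :: "complex \<Rightarrow> (nat \<Rightarrow> real) \<Rightarrow> complex"
  assumes "m \<ge> 2" and "\<rho> > 0"
    and "g \<in> frakX m (ball c \<rho>)"
    and "\<theta> > 0"
  shows "(\<lambda>u x. complex_of_real (f_theta \<theta> (x 0 - ln (1 + exp (x 0 + x 1)))) *
            (LINT y|lborel. g u (x(0 := x 0 + x 1 - y, 1 := y))))
         \<in> frakX m (ball c \<rho>)"
proof -
  note m = assms(1) and th = assms(4)
  define U where "U = ball c \<rho>"
  obtain C r where gm: "(\<lambda>(u, x). g u x) \<in> borel_measurable (restrict_space borel U \<Otimes>\<^sub>M Rm m)"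
    and Cr: "C > 0" "r > 0"
    and gb: "\<And>u x. u \<in> U \<Longrightarrow> x \<in> space (Rm m) \<Longrightarrow> norm (g u x) \<le> C * exp (- r * (\<Sum>i<m. \<bar>x i\<bar>))"
    and gh: "\<And>x. x \<in> space (Rm m) \<Longrightarrow> (\<lambda>u. g u x) holomorphic_on U"
    using assms(3) unfolding frakX_def U_def by blast
  define F where "F x = f_theta \<theta> (x 0 - ln (1 + exp (x 0 + x 1)))" for x :: "nat \<Rightarrow> real"
  define I where "I u x = (LINT y|lborel. g u (x(0 := x 0 + x 1 - y, 1 := y)))" for u x
  define T where "T x = (\<Sum>i\<in>{2..<m}. \<bar>x i\<bar>)" for x :: "nat \<Rightarrow> real"
  define K where "K = (LINT y|lborel. exp (- (r / 2) * \<bar>y\<bar>))"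
  define Cst where "Cst x = C * exp (- (r / 2) * \<bar>x 0 + x 1\<bar>) * exp (- r * T x)" for x :: "nat \<Rightarrow> real"
  have Kint: "integrable lborel (\<lambda>y. exp (- (r / 2) * \<bar>y\<bar>))"
    using integrable_exp_abs[of "r / 2"] Cr by simp
  have K0: "K \<ge> 0" unfolding K_def by (rule Bochner_Integration.integral_nonneg) simp
  have T0: "T x \<ge> 0" for x unfolding T_def by (rule sum_nonneg) auto
  have Cst0: "Cst x \<ge> 0" for x unfolding Cst_def using Cr by simp
  have hmeas: "(\<lambda>y. g u (x(0 := x 0 + x 1 - y, 1 := y))) \<in> borel_measurable lborel"
    if u: "u \<in> U" and x: "x \<in> space (Rm m)" for u x
  proof -
    have "(\<lambda>y. (u, x(0 := x 0 + x 1 - y, 1 := y))) \<in> measurable lborel (restrict_space borel U \<Otimes>\<^sub>M Rm m)"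
    proof (rule measurable_Pair)
      show "(\<lambda>y. u) \<in> measurable lborel (restrict_space borel U)"
        using u by (intro measurable_const) (simp add: space_restrict_space)
      show "(\<lambda>y. x(0 := x 0 + x 1 - y, 1 := y)) \<in> measurable lborel (Rm m)"
        using upd_meas[of "\<lambda>_. x" lborel m "\<lambda>y. y"] m x by simp
    qed
    from measurable_compose[OF this gm] show ?thesis by simp
  qed
  have ptb: "norm (g u (x(0 := x 0 + x 1 - y, 1 := y))) \<le> Cst x * exp (- (r / 2) * \<bar>y\<bar>)"
    if u: "u \<in> U" and x: "x \<in> space (Rm m)" for u x y
  proof -
    define s where "s = x 0 + x 1"
    have "norm (g u (x(0 := x 0 + x 1 - y, 1 := y)))
        \<le> C * exp (- r * (\<Sum>i<m. \<bar>(x(0 := x 0 + x 1 - y, 1 := y)) i\<bar>))"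
      using gb[OF u upd_space[OF x m]] .
    also have "(\<Sum>i<m. \<bar>(x(0 := x 0 + x 1 - y, 1 := y)) i\<bar>) = \<bar>s - y\<bar> + \<bar>y\<bar> + T x"
      unfolding T_def s_def by (rule sum_upd[OF m])
    also have "C * exp (- r * (\<bar>s - y\<bar> + \<bar>y\<bar> + T x)) \<le> C * exp (- (r / 2) * \<bar>s\<bar> + (- r * T x) + (- (r / 2) * \<bar>y\<bar>))"
    proof -
      have "\<bar>s\<bar> \<le> \<bar>s - y\<bar> + \<bar>y\<bar>" using abs_triangle_ineq[of "s - y" y] by simp
      then have tri: "\<bar>s\<bar> + \<bar>y\<bar> \<le> 2 * (\<bar>s - y\<bar> + \<bar>y\<bar>)" by (smt (verit) abs_ge_zero)
      have "r * (\<bar>s\<bar> + \<bar>y\<bar>) \<le> r * (2 * (\<bar>s - y\<bar> + \<bar>y\<bar>))"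
        using tri Cr by (intro mult_left_mono) auto
      then have "- r * (\<bar>s - y\<bar> + \<bar>y\<bar> + T x) \<le> - (r / 2) * \<bar>s\<bar> + (- r * T x) + (- (r / 2) * \<bar>y\<bar>)"
        by (simp add: algebra_simps)
      then show ?thesis using Cr by simp
    qed
    also have "\<dots> = Cst x * exp (- (r / 2) * \<bar>y\<bar>)"
      unfolding Cst_def s_def by (simp add: mult_exp_exp)
    finally show ?thesis .
  qed
  have Bint: "integrable lborel (\<lambda>y. Cst x * exp (- (r / 2) * \<bar>y\<bar>))" for x
    using Kint by simp
  have hint: "integrable lborel (\<lambda>y. g u (x(0 := x 0 + x 1 - y, 1 := y)))"
    if u: "u \<in> U" and x: "x \<in> space (Rm m)" for u x
    using Bint hmeas[OF u x]
    by (rule Bochner_Integration.integrable_bound) (use ptb[OF u x] in \<open>auto intro: order_trans[OF _ abs_ge_self]\<close>)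
  have Ib: "norm (I u x) \<le> Cst x * K" if u: "u \<in> U" and x: "x \<in> space (Rm m)" for u x
  proof -
    have "norm (I u x) \<le> (LINT y|lborel. Cst x * exp (- (r / 2) * \<bar>y\<bar>))"
      unfolding I_def by (rule Bochner_Integration.integral_norm_bound_integral[OF hint[OF u x] Bint ptb[OF u x]])
    also have "\<dots> = Cst x * K" unfolding K_def by simp
    finally show ?thesis .
  qed
  have holo: "(\<lambda>u. complex_of_real (F x) * I u x) holomorphic_on U" if x: "x \<in> space (Rm m)" for x
  proof (rule holomorphic_on_mult[OF holomorphic_on_const])
    show "(\<lambda>u. I u x) holomorphic_on U"
      unfolding I_def
    proof (rule holo_integral[where B="\<lambda>y. Cst x * exp (- (r / 2) * \<bar>y\<bar>)"])
      show "open U" by (simp add: U_def)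
      show "(\<lambda>u. g u (x(0 := x 0 + x 1 - y, 1 := y))) holomorphic_on U" for y
        by (rule gh[OF upd_space[OF x m]])
    qed (use hmeas[OF _ x] Bint ptb[OF _ x] in auto)
  qed
  define N where "N = restrict_space borel U \<Otimes>\<^sub>M Rm m"
  have Phi: "(\<lambda>\<omega>. (fst (fst \<omega>), (snd (fst \<omega>))(0 := snd (fst \<omega>) 0 + snd (fst \<omega>) 1 - snd \<omega>, 1 := snd \<omega>)))
      \<in> measurable (N \<Otimes>\<^sub>M lborel) N"
    unfolding N_def
  proof (rule measurable_Pair)
    show "(\<lambda>\<omega>. fst (fst \<omega>)) \<in> measurable ((restrict_space borel U \<Otimes>\<^sub>M Rm m) \<Otimes>\<^sub>M lborel) (restrict_space borel U)"
      by (rule measurable_compose[OF measurable_fst measurable_fst])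
    have X: "(\<lambda>\<omega>. snd (fst \<omega>)) \<in> measurable ((restrict_space borel U \<Otimes>\<^sub>M Rm m) \<Otimes>\<^sub>M lborel) (Rm m)"
      by (rule measurable_compose[OF measurable_fst measurable_snd])
    have Y: "snd \<in> borel_measurable ((restrict_space borel U \<Otimes>\<^sub>M Rm m) \<Otimes>\<^sub>M lborel)"
      using measurable_snd[of "restrict_space borel U \<Otimes>\<^sub>M Rm m" lborel] by simp
    show "(\<lambda>\<omega>. (snd (fst \<omega>))(0 := snd (fst \<omega>) 0 + snd (fst \<omega>) 1 - snd \<omega>, 1 := snd \<omega>))
        \<in> measurable ((restrict_space borel U \<Otimes>\<^sub>M Rm m) \<Otimes>\<^sub>M lborel) (Rm m)"
      using upd_meas[OF X Y m] .
  qed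
  have "(\<lambda>\<omega>. (\<lambda>(u, x). g u x) (fst (fst \<omega>), (snd (fst \<omega>))(0 := snd (fst \<omega>) 0 + snd (fst \<omega>) 1 - snd \<omega>, 1 := snd \<omega>)))
      \<in> borel_measurable (N \<Otimes>\<^sub>M lborel)"
    using measurable_compose[OF Phi gm[folded N_def]] .
  moreover have "(\<lambda>\<omega>. (\<lambda>(u, x). g u x) (fst (fst \<omega>), (snd (fst \<omega>))(0 := snd (fst \<omega>) 0 + snd (fst \<omega>) 1 - snd \<omega>, 1 := snd \<omega>)))
      = case_prod (\<lambda>p y. g (fst p) ((snd p)(0 := snd p 0 + snd p 1 - y, 1 := y)))"
    by (auto simp: fun_eq_iff)
  ultimately have J: "case_prod (\<lambda>p y. g (fst p) ((snd p)(0 := snd p 0 + snd p 1 - y, 1 := y)))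
      \<in> borel_measurable (N \<Otimes>\<^sub>M lborel)" by simp
  have Im: "(\<lambda>p. I (fst p) (snd p)) \<in> borel_measurable N"
    unfolding I_def by (rule lborel.borel_measurable_lebesgue_integral[OF J])
  have c0: "(\<lambda>x. x 0) \<in> borel_measurable (Rm m)" and c1: "(\<lambda>x. x 1) \<in> borel_measurable (Rm m)"
    using measurable_component_singleton[of 0 "{..<m}" "\<lambda>_. lborel"]
      measurable_component_singleton[of 1 "{..<m}" "\<lambda>_. lborel"] m by auto
  have Fm0: "F \<in> borel_measurable (Rm m)"
    unfolding F_def f_theta_def using c0 c1 by measurable
  have Fm: "(\<lambda>p. F (snd p)) \<in> borel_measurable N"
    unfolding N_def by (rule measurable_compose[OF measurable_snd Fm0])
  have jm: "(\<lambda>(u, x). complex_of_real (F x) * I u x) \<in> borel_measurable N"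
  proof -
    have "(\<lambda>p. complex_of_real (F (snd p)) * I (fst p) (snd p)) \<in> borel_measurable N"
      using Fm Im by measurable
    moreover have "(\<lambda>(u, x). complex_of_real (F x) * I u x) = (\<lambda>p. complex_of_real (F (snd p)) * I (fst p) (snd p))"
      by (auto simp: fun_eq_iff)
    ultimately show ?thesis by simp
  qed
  define a where "a = min \<theta> 1"
  define r' where "r' = min (min a (r / 2) / 2) r"
  define A where "A = exp ((\<theta> + 1)\<^sup>2 / 2)"
  define C' where "C' = A * C * (K + 1) * exp (2 * r')"
  have a0: "a > 0" using th by (simp add: a_def)
  have r'0: "r' > 0" using a0 Cr by (simp add: r'_def)
  have C'0: "C' > 0" using Cr K0 by (simp add: C'_def A_def)
  have bound: "norm (complex_of_real (F x) * I u x) \<le> C' * exp (- r' * (\<Sum>i<m. \<bar>x i\<bar>))"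
    if u: "u \<in> U" and x: "x \<in> space (Rm m)" for u x
  proof -
    define z where "z = x 0 - ln (1 + exp (x 0 + x 1))"
    define s where "s = x 0 + x 1"
    have Fz: "F x = f_theta \<theta> z" by (simp add: F_def z_def)
    have F0: "0 \<le> F x" by (simp add: F_def f_theta_def)
    have Fb: "F x \<le> A * exp (- a * \<bar>z\<bar>)"
      unfolding Fz A_def a_def by (rule f_theta_bound[OF th])
    have "norm (complex_of_real (F x) * I u x) = F x * norm (I u x)"
      using F0 by (simp add: norm_mult)
    also have "\<dots> \<le> (A * exp (- a * \<bar>z\<bar>)) * (Cst x * (K + 1))"
    proof (rule mult_mono)
      show "norm (I u x) \<le> Cst x * (K + 1)"
        using Ib[OF u x] Cst0[of x] by (smt (verit) mult_left_mono)
    qed (use Fb Cst0[of x] K0 in \<open>auto simp: A_def\<close>)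
    also have "\<dots> = A * C * (K + 1) * exp (- a * \<bar>z\<bar> + (- (r / 2) * \<bar>s\<bar>) + (- r * T x))"
      by (simp add: Cst_def s_def mult_exp_exp)
    also have "\<dots> \<le> A * C * (K + 1) * exp (- r' * (\<Sum>i<m. \<bar>x i\<bar>) + 2 * r')"
    proof -
      have cb: "\<bar>x 0\<bar> + \<bar>x 1\<bar> \<le> 2 * \<bar>z\<bar> + \<bar>s\<bar> + 2"
        unfolding z_def s_def by (rule coord_bound)
      have sum: "(\<Sum>i<m. \<bar>x i\<bar>) = \<bar>x 0\<bar> + \<bar>x 1\<bar> + T x"
        unfolding T_def by (rule sum_split2[OF m])
      have r1: "2 * r' \<le> a" "r' \<le> r / 2" "r' \<le> r" using a0 Cr by (auto simp: r'_def)
      have "r' * (\<bar>x 0\<bar> + \<bar>x 1\<bar>) \<le> r' * (2 * \<bar>z\<bar> + \<bar>s\<bar> + 2)"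
        using cb r'0 by (intro mult_left_mono) auto
      moreover have "(2 * r') * \<bar>z\<bar> \<le> a * \<bar>z\<bar>" using r1 by (intro mult_right_mono) auto
      moreover have "r' * \<bar>s\<bar> \<le> (r / 2) * \<bar>s\<bar>" using r1 by (intro mult_right_mono) auto
      moreover have "r' * T x \<le> r * T x" using r1 T0[of x] by (intro mult_right_mono) auto
      ultimately have "- a * \<bar>z\<bar> + (- (r / 2) * \<bar>s\<bar>) + (- r * T x) \<le> - r' * (\<Sum>i<m. \<bar>x i\<bar>) + 2 * r'"
        unfolding sum by (simp add: algebra_simps)
      moreover have "A * C * (K + 1) \<ge> 0" using Cr K0 by (simp add: A_def)
      ultimately show ?thesis by (intro mult_left_mono) auto
    qed
    also have "\<dots> = C' * exp (- r' * (\<Sum>i<m. \<bar>x i\<bar>))"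
      by (simp add: C'_def mult_exp_exp)
    finally show ?thesis .
  qed
  have main: "(\<lambda>u x. complex_of_real (F x) * I u x) \<in> frakX m U"
    unfolding frakX_def
    using jm[unfolded N_def] holo C'0 r'0 bound by blast
  show ?thesis using main unfolding F_def I_def U_def .
qed

end
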